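(* Let $\kappa$ be a regular uncountable cardinal and $I$ a pleasant ideal on $\kappa$. If there is a thin set $S\in I^*$, then $I$ is quasinormal, and hence normal.
   Context: An ideal on $\kappa$ is a family of subsets of $\kappa$ closed under subsets and finite unions, which is $<\kappa$-complete and contains all singletons. $I^*=\{\kappa\setminus X: X\in I\}$. A set $S$ of ordinals is thin if $\alpha\in S$ implies $\alpha+1\notin S$. For $A\subseteq\kappa$ and $X_\alpha\subseteq\kappa$, $\bigtriangledown_{\alpha\in A}X_\alpha=\{\xi<\kappa:\exists\alpha<\xi\,(\alpha\in A\wedge \xi\in X_\alpha)\}$. $I$ is normal if $X_\alpha\in I$ for all $\alpha<\kappa$ implies $\bigtriangledown_{\alpha<\kappa}X_\alpha\in I$. $I$ is pleasant if whenever $A\in I$ and $X_\alpha\in I$ for all $\alpha$, then $\bigtriangledown_{\alpha\in A}X_\alpha\in I$. $I$ is quasinormal if for every sequence $\langle X_\alpha\rangle_{\alpha<\kappa}$ of members of $I$ there is $Q\in I^*$ with $\bigtriangledown_{\alpha\in Q}X_\alpha\in I$. *)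

theory Defs
  imports Main "HOL-Library.Equipollence" "HOL-Library.Countable_Set"
begin

text \<open>The cardinal kappa is represented by a well-ordered type 'a: its elements are the
ordinals below kappa, ordered by the type's order.\<close>

definition is_cardinal_type :: "'a::wellorder itself \<Rightarrow> bool" where
  "is_cardinal_type _ \<longleftrightarrow> (\<forall>\<alpha>::'a. \<not> ({..<\<alpha>} \<approx> (UNIV::'a set)))"

definition is_regular_type :: "'a::wellorder itself \<Rightarrow> bool" where
  "is_regular_type _ \<longleftrightarrow>
     (\<forall>A::'a set. (\<forall>\<alpha>. \<exists>\<beta>\<in>A. \<alpha> \<le> \<beta>) \<longrightarrow> A \<approx> (UNIV::'a set))"

text \<open>Ordinal successor alpha+1 (below kappa, a limit ordinal).\<close>
definition osucc :: "'a::wellorder \<Rightarrow> 'a" where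
  "osucc \<alpha> = (LEAST \<beta>. \<alpha> < \<beta>)"

definition thin :: "'a::wellorder set \<Rightarrow> bool" where
  "thin S \<longleftrightarrow> (\<forall>\<alpha>\<in>S. osucc \<alpha> \<notin> S)"

definition is_ideal :: "'a::wellorder set set \<Rightarrow> bool" where
  "is_ideal I \<longleftrightarrow>
     (\<forall>X Y. X \<in> I \<and> Y \<subseteq> X \<longrightarrow> Y \<in> I) \<and>
     (\<forall>X Y. X \<in> I \<and> Y \<in> I \<longrightarrow> X \<union> Y \<in> I) \<and>
     (\<forall>(\<gamma>::'a) (X::'a \<Rightarrow> 'a set). (\<forall>\<beta><\<gamma>. X \<beta> \<in> I) \<longrightarrow> (\<Union>\<beta>\<in>{..<\<gamma>}. X \<beta>) \<in> I) \<and>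
     (\<forall>\<alpha>. {\<alpha>} \<in> I)"

definition dual_filter :: "'a set set \<Rightarrow> 'a set set" where
  "dual_filter I = {UNIV - X | X. X \<in> I}"

definition diag_union :: "'a::wellorder set \<Rightarrow> ('a \<Rightarrow> 'a set) \<Rightarrow> 'a set" where
  "diag_union A X = {\<xi>. \<exists>\<alpha><\<xi>. \<alpha> \<in> A \<and> \<xi> \<in> X \<alpha>}"

definition normal_ideal :: "'a::wellorder set set \<Rightarrow> bool" where
  "normal_ideal I \<longleftrightarrow> (\<forall>X. (\<forall>\<alpha>. X \<alpha> \<in> I) \<longrightarrow> diag_union UNIV X \<in> I)"

definition pleasant :: "'a::wellorder set set \<Rightarrow> bool" where
  "pleasant I \<longleftrightarrow> (\<forall>A X. A \<in> I \<and> (\<forall>\<alpha>. X \<alpha> \<in> I) \<longrightarrow> diag_union A X \<in> I)"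

definition quasinormal :: "'a::wellorder set set \<Rightarrow> bool" where
  "quasinormal I \<longleftrightarrow>
     (\<forall>X. (\<forall>\<alpha>. X \<alpha> \<in> I) \<longrightarrow> (\<exists>Q \<in> dual_filter I. diag_union Q X \<in> I))"

end

theory Submission
  imports Defs
begin

lemma osucc_gt: "(\<alpha>::'a::wellorder) < \<xi> \<Longrightarrow> \<alpha> < osucc \<alpha>"
  unfolding osucc_def by (rule LeastI)

lemma osucc_le: "(\<alpha>::'a::wellorder) < \<xi> \<Longrightarrow> osucc \<alpha> \<le> \<xi>"
  unfolding osucc_def by (rule Least_le)

lemma osucc_inj:
  assumes "(a::'a::wellorder) < osucc a" "b < osucc b" "osucc a = osucc b"
  shows "a = b"
proof (rule ccontr)
  assume "a \<noteq> b"
  then consider "a < b" | "b < a" by (metis linorder_neqE)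
  then show False
  proof cases
    case 1 then have "osucc a \<le> b" by (rule osucc_le)
    with assms show False by simp
  next
    case 2 then have "osucc b \<le> a" by (rule osucc_le)
    with assms show False by simp
  qed
qed

lemma main_lemma:
  fixes I :: "'a::wellorder set set"
  assumes id: "is_ideal I" and pl: "pleasant I" and th: "thin S" and SI: "S \<in> dual_filter I"
    and X: "\<forall>\<alpha>. X \<alpha> \<in> I"
  shows "diag_union S X \<in> I"
proof -
  from SI obtain Z where Z: "Z \<in> I" "S = UNIV - Z" unfolding dual_filter_def by blast
  have sub: "\<And>A B. A \<in> I \<Longrightarrow> B \<subseteq> A \<Longrightarrow> B \<in> I" using id unfolding is_ideal_def by blast
  have un: "\<And>A B. A \<in> I \<Longrightarrow> B \<in> I \<Longrightarrow> A \<union> B \<in> I" using id unfolding is_ideal_def by blast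
  define T where "T = osucc ` S"
  have "T \<subseteq> Z" using th Z(2) unfolding T_def thin_def by blast
  then have TI: "T \<in> I" using sub Z(1) by blast
  define Y where "Y \<beta> = X (THE \<alpha>. \<alpha> < osucc \<alpha> \<and> osucc \<alpha> = \<beta>)" for \<beta>
  have YI: "\<forall>\<beta>. Y \<beta> \<in> I" using X unfolding Y_def by blast
  have DI: "diag_union T Y \<in> I" using pl TI YI unfolding pleasant_def by blast
  have "diag_union S X \<subseteq> diag_union T Y \<union> T"
  proof
    fix \<xi> assume "\<xi> \<in> diag_union S X"
    then obtain \<alpha> where a: "\<alpha> < \<xi>" "\<alpha> \<in> S" "\<xi> \<in> X \<alpha>" unfolding diag_union_def by blast
    have g: "\<alpha> < osucc \<alpha>" using a(1) by (rule osucc_gt)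
    have le: "osucc \<alpha> \<le> \<xi>" using a(1) by (rule osucc_le)
    have the: "(THE \<alpha>'. \<alpha>' < osucc \<alpha>' \<and> osucc \<alpha>' = osucc \<alpha>) = \<alpha>"
      using g osucc_inj by blast
    show "\<xi> \<in> diag_union T Y \<union> T"
    proof (cases "osucc \<alpha> = \<xi>")
      case True then show ?thesis using a(2) unfolding T_def by blast
    next
      case False
      then have "osucc \<alpha> < \<xi>" using le by simp
      moreover have "\<xi> \<in> Y (osucc \<alpha>)" unfolding Y_def the using a(3) .
      ultimately show ?thesis using a(2) unfolding diag_union_def T_def by blast
    qed
  qed
  then show ?thesis using sub un DI TI by blast
qed

theorem theorem3p11:
  fixes I :: "'a::wellorder set set"
  assumes "is_cardinal_type TYPE('a)"
    and "is_regular_type TYPE('a)"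
    and "uncountable (UNIV :: 'a set)"
    and "is_ideal I"
    and "pleasant I"
    and "\<exists>S. thin S \<and> S \<in> dual_filter I"
  shows "quasinormal I \<and> normal_ideal I"
proof -
  from assms(6) obtain S where S: "thin S" "S \<in> dual_filter I" by blast
  have q: "quasinormal I"
    unfolding quasinormal_def using main_lemma[OF assms(4,5) S] S(2) by blast
  have "normal_ideal I"
    unfolding normal_ideal_def
  proof (intro allI impI)
    fix X :: "'a \<Rightarrow> 'a set" assume X: "\<forall>\<alpha>. X \<alpha> \<in> I"
    from S(2) obtain Z where Z: "Z \<in> I" "S = UNIV - Z" unfolding dual_filter_def by blast
    have sub: "\<And>A B. A \<in> I \<Longrightarrow> B \<subseteq> A \<Longrightarrow> B \<in> I" using assms(4) unfolding is_ideal_def by blast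
    have un: "\<And>A B. A \<in> I \<Longrightarrow> B \<in> I \<Longrightarrow> A \<union> B \<in> I" using assms(4) unfolding is_ideal_def by blast
    have 1: "diag_union S X \<in> I" using main_lemma[OF assms(4,5) S X] .
    have 2: "diag_union Z X \<in> I" using assms(5) Z(1) X unfolding pleasant_def by blast
    have "diag_union UNIV X \<subseteq> diag_union S X \<union> diag_union Z X"
      using Z(2) unfolding diag_union_def by blast
    then show "diag_union UNIV X \<in> I" using sub un 1 2 by blast
  qed
  with q show ?thesis by blast
qed

end
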